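(* Let $H$ be a bipartite graph and let $k_1 = \min \max(|A|,|B|)$ and $k_2 = \min \min(|A|,|B|)$, where both minima range over all partitions $(A,B)$ of $V(H)$ into two independent sets. Assume $k_2 \ge 2$. Let $G$ be an $n$-vertex graph with chromatic number $\chi$ and independence number $\alpha$. If $k_2 \ge 3$, then $$\chi_H(G) \le \min\left\{ \frac{n}{k_1-1} + \frac{k_1-2}{k_1-1}\chi,\ \frac{n}{k_2-1}\left(1 - \frac{1}{\chi}\right) + \frac{k_2-2}{k_2-1}(\chi - 1) + 1 \right\}.$$ If $k_2 = 2$, then $$\chi_H(G) \le \min\left\{ \frac{n}{k_1-1} + \frac{k_1-2}{k_1-1}\chi,\ n - \alpha + 1 \right\}.$$
   Context: All graphs are finite and simple. For a fixed bipartite graph $H$, a proper vertex coloring of a graph $G$ is called an $H$-avoiding coloring if for any two color classes, the subgraph of $G$ induced by their union contains no induced subgraph isomorphic to $H$. $\chi_H(G)$ denotes the minimum number of colors in an $H$-avoiding coloring of $G$. *)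

theory Defs
  imports Complex_Main
begin

definition simple_graph :: "'a set \<Rightarrow> ('a \<Rightarrow> 'a \<Rightarrow> bool) \<Rightarrow> bool" where
  "simple_graph V E \<longleftrightarrow> finite V \<and> (\<forall>u v. E u v \<longrightarrow> u \<in> V \<and> v \<in> V)
     \<and> (\<forall>u v. E u v \<longrightarrow> E v u) \<and> (\<forall>u. \<not> E u u)"

definition independent :: "('a \<Rightarrow> 'a \<Rightarrow> bool) \<Rightarrow> 'a set \<Rightarrow> bool" where
  "independent E S \<longleftrightarrow> (\<forall>u\<in>S. \<forall>v\<in>S. \<not> E u v)"

definition bipartitions :: "'a set \<Rightarrow> ('a \<Rightarrow> 'a \<Rightarrow> bool) \<Rightarrow> ('a set \<times> 'a set) set" where
  "bipartitions V E = {(A, B). A \<union> B = V \<and> A \<inter> B = {} \<and> independent E A \<and> independent E B}"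

definition bipartite :: "'a set \<Rightarrow> ('a \<Rightarrow> 'a \<Rightarrow> bool) \<Rightarrow> bool" where
  "bipartite V E \<longleftrightarrow> bipartitions V E \<noteq> {}"

definition bip_k1 :: "'a set \<Rightarrow> ('a \<Rightarrow> 'a \<Rightarrow> bool) \<Rightarrow> nat" where
  "bip_k1 V E = Min ((\<lambda>(A, B). max (card A) (card B)) ` bipartitions V E)"

definition bip_k2 :: "'a set \<Rightarrow> ('a \<Rightarrow> 'a \<Rightarrow> bool) \<Rightarrow> nat" where
  "bip_k2 V E = Min ((\<lambda>(A, B). min (card A) (card B)) ` bipartitions V E)"

definition proper_coloring :: "'a set \<Rightarrow> ('a \<Rightarrow> 'a \<Rightarrow> bool) \<Rightarrow> ('a \<Rightarrow> nat) \<Rightarrow> nat \<Rightarrow> bool" where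
  "proper_coloring V E c k \<longleftrightarrow> (\<forall>v\<in>V. c v < k) \<and> (\<forall>u v. E u v \<longrightarrow> c u \<noteq> c v)"

definition chromatic_number :: "'a set \<Rightarrow> ('a \<Rightarrow> 'a \<Rightarrow> bool) \<Rightarrow> nat" where
  "chromatic_number V E = (LEAST k. \<exists>c. proper_coloring V E c k)"

definition independence_number :: "'a set \<Rightarrow> ('a \<Rightarrow> 'a \<Rightarrow> bool) \<Rightarrow> nat" where
  "independence_number V E = Max (card ` {S. S \<subseteq> V \<and> independent E S})"

definition has_induced_copy ::
  "'b set \<Rightarrow> ('b \<Rightarrow> 'b \<Rightarrow> bool) \<Rightarrow> 'a set \<Rightarrow> ('a \<Rightarrow> 'a \<Rightarrow> bool) \<Rightarrow> bool" where
  "has_induced_copy VH EH S E \<longleftrightarrow>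
     (\<exists>f. inj_on f VH \<and> f ` VH \<subseteq> S \<and> (\<forall>u\<in>VH. \<forall>v\<in>VH. EH u v \<longleftrightarrow> E (f u) (f v)))"

definition H_avoiding_coloring ::
  "'b set \<Rightarrow> ('b \<Rightarrow> 'b \<Rightarrow> bool) \<Rightarrow> 'a set \<Rightarrow> ('a \<Rightarrow> 'a \<Rightarrow> bool) \<Rightarrow> ('a \<Rightarrow> nat) \<Rightarrow> nat \<Rightarrow> bool" where
  "H_avoiding_coloring VH EH V E c k \<longleftrightarrow> proper_coloring V E c k \<and>
     (\<forall>i j. \<not> has_induced_copy VH EH {v\<in>V. c v = i \<or> c v = j} E)"

definition chi_H ::
  "'b set \<Rightarrow> ('b \<Rightarrow> 'b \<Rightarrow> bool) \<Rightarrow> 'a set \<Rightarrow> ('a \<Rightarrow> 'a \<Rightarrow> bool) \<Rightarrow> nat" where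
  "chi_H VH EH V E = (LEAST k. \<exists>c. H_avoiding_coloring VH EH V E c k)"

end

theory Submission
  imports Defs
begin

lemma bip_finite: "simple_graph VH EH \<Longrightarrow> finite (bipartitions VH EH)"
proof -
  assume "simple_graph VH EH"
  hence f: "finite VH" by (simp add: simple_graph_def)
  have "bipartitions VH EH \<subseteq> Pow VH \<times> Pow VH" unfolding bipartitions_def by auto
  thus ?thesis using f by (meson finite_Pow_iff finite_SigmaI finite_subset)
qed

lemma key:
  assumes H: "simple_graph VH EH" and pc: "proper_coloring V E c k"
    and cp: "has_induced_copy VH EH {v\<in>V. c v = i \<or> c v = j} E" and fV: "finite V"
    and k2: "bip_k2 VH EH \<ge> 1"
  shows "i \<noteq> j \<and> bip_k2 VH EH \<le> card {v\<in>V. c v = i} \<and> bip_k2 VH EH \<le> card {v\<in>V. c v = j}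
    \<and> bip_k1 VH EH \<le> max (card {v\<in>V. c v = i}) (card {v\<in>V. c v = j})"
proof -
  obtain f where inj: "inj_on f VH" and im: "f ` VH \<subseteq> {v\<in>V. c v = i \<or> c v = j}"
    and iso: "\<forall>u\<in>VH. \<forall>v\<in>VH. EH u v \<longleftrightarrow> E (f u) (f v)"
    using cp unfolding has_induced_copy_def by blast
  define A where "A = {u\<in>VH. c (f u) = i}"
  define B where "B = VH - A"
  have Bj: "\<And>u. u \<in> B \<Longrightarrow> c (f u) = j" using im unfolding A_def B_def by auto
  have prp: "\<And>u v. E u v \<Longrightarrow> c u \<noteq> c v" using pc unfolding proper_coloring_def by blast
  have indA: "independent EH A" unfolding independent_def A_def using iso prp by force
  have indB: "independent EH B" unfolding independent_def using iso prp Bj unfolding B_def by force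
  have bp: "(A, B) \<in> bipartitions VH EH" unfolding bipartitions_def using indA indB
    unfolding B_def A_def by auto
  have fin: "finite (bipartitions VH EH)" using bip_finite[OF H] .
  have m2: "bip_k2 VH EH \<le> min (card A) (card B)"
    unfolding bip_k2_def by (rule Min_le) (use fin bp in auto)
  have m1: "bip_k1 VH EH \<le> max (card A) (card B)"
    unfolding bip_k1_def by (rule Min_le) (use fin bp in auto)
  have cA: "card A \<le> card {v\<in>V. c v = i}"
    by (rule card_inj_on_le[where f=f]) (use inj im fV in \<open>auto simp: A_def intro: inj_on_subset\<close>)
  have cB: "card B \<le> card {v\<in>V. c v = j}"
    by (rule card_inj_on_le[where f=f]) (use inj im fV Bj in \<open>auto simp: B_def intro: inj_on_subset\<close>)
  have "i \<noteq> j"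
  proof
    assume "i = j"
    hence "B = {}" using Bj im unfolding B_def A_def by auto
    thus False using m2 k2 by simp
  qed
  thus ?thesis using m1 m2 cA cB by auto
qed

lemma split:
  fixes m :: nat
  assumes "finite C" "m \<ge> 1"
  shows "\<exists>Q. finite Q \<and> \<Union>Q = C \<and> (\<forall>P\<in>Q. \<forall>P'\<in>Q. P \<noteq> P' \<longrightarrow> P \<inter> P' = {})
     \<and> (\<forall>P\<in>Q. card P \<le> m) \<and> card Q * m \<le> card C + m - 1"
  using assms
proof (induction "card C" arbitrary: C rule: less_induct)
  case less
  show ?case
  proof (cases "C = {}")
    case True
    show ?thesis by (rule exI[of _ "{}"]) (use True in auto)
  next
    case ne: False
    show ?thesis
  proof (cases "card C \<le> m")
    case True
    show ?thesis by (rule exI[of _ "{C}"]) (use True less.prems ne card_gt_0_iff[of C] in auto)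
  next
    case False
    obtain D where D: "D \<subseteq> C" "card D = m" "finite D"
      using obtain_subset_with_card_n[of m C] False by auto
    have lt: "card (C - D) < card C" using D less.prems False
      by (metis card_Diff_subset diff_less le_0_eq less_one not_le not_less_iff_gr_or_eq)
    obtain Q where Q: "finite Q" "\<Union>Q = C - D" "\<forall>P\<in>Q. \<forall>P'\<in>Q. P \<noteq> P' \<longrightarrow> P \<inter> P' = {}"
      "\<forall>P\<in>Q. card P \<le> m" "card Q * m \<le> card (C - D) + m - 1"
      using less.hyps[OF lt] less.prems by auto
    have cd: "card (C - D) = card C - m" using D less.prems by (simp add: card_Diff_subset)
    have ci: "card (insert D Q) \<le> card Q + 1" by (simp add: Q(1) card_insert_if)
    have "card (insert D Q) * m \<le> (card Q + 1) * m" using ci mult_le_mono1 by blast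
    also have "\<dots> \<le> card C + m - 1" using Q(5) cd False by (simp add: algebra_simps)
    finally have c: "card (insert D Q) * m \<le> card C + m - 1" .
    have dj: "\<forall>P\<in>insert D Q. \<forall>P'\<in>insert D Q. P \<noteq> P' \<longrightarrow> P \<inter> P' = {}"
      using Q(2,3) by blast
    show ?thesis
      by (rule exI[of _ "insert D Q"]) (use Q D dj c in auto)
  qed
  qed
qed

lemma partition_chiH:
  assumes H: "simple_graph VH EH" and G: "simple_graph V E" and k2: "bip_k2 VH EH \<ge> 1"
    and fin: "finite PP" and cover: "\<Union>PP = V"
    and disj: "\<forall>P\<in>PP. \<forall>Q\<in>PP. P \<noteq> Q \<longrightarrow> P \<inter> Q = {}"
    and ind: "\<forall>P\<in>PP. independent E P"
    and good: "\<forall>P\<in>PP. \<forall>Q\<in>PP. P \<noteq> Q \<longrightarrow> card P < bip_k2 VH EH \<or> card Q < bip_k2 VH EH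
       \<or> (card P < bip_k1 VH EH \<and> card Q < bip_k1 VH EH)"
  shows "chi_H VH EH V E \<le> card PP"
proof -
  have fV: "finite V" using G by (simp add: simple_graph_def)
  obtain h where h: "bij_betw h PP {0..<card PP}" using ex_bij_betw_finite_nat[OF fin] by blast
  define blk where "blk v = (THE P. P \<in> PP \<and> v \<in> P)" for v
  have blk: "\<And>v P. v \<in> V \<Longrightarrow> P \<in> PP \<Longrightarrow> v \<in> P \<longleftrightarrow> blk v = P"
  proof -
    fix v P assume v: "v \<in> V" and P: "P \<in> PP"
    have ex: "\<exists>!P. P \<in> PP \<and> v \<in> P" using v cover disj by blast
    show "v \<in> P \<longleftrightarrow> blk v = P"
    proof
      assume "v \<in> P" thus "blk v = P" unfolding blk_def using P ex by (metis (mono_tags, lifting) the_equality)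
    next
      assume "blk v = P" thus "v \<in> P" unfolding blk_def using ex by (metis (mono_tags, lifting) theI)
    qed
  qed
  have blkin: "\<And>v. v \<in> V \<Longrightarrow> blk v \<in> PP \<and> v \<in> blk v"
  proof -
    fix v assume v: "v \<in> V"
    then obtain P where "P \<in> PP" "v \<in> P" using cover by blast
    thus "blk v \<in> PP \<and> v \<in> blk v" using blk[OF v] by auto
  qed
  define d where "d v = h (blk v)" for v
  have EV: "\<And>u v. E u v \<Longrightarrow> u \<in> V \<and> v \<in> V" using G by (simp add: simple_graph_def)
  have pc: "proper_coloring V E d (card PP)"
    unfolding proper_coloring_def
  proof (intro conjI allI impI ballI)
    fix v assume "v \<in> V" thus "d v < card PP" unfolding d_def using blkin h
      by (metis atLeastLessThan_iff bij_betwE)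
  next
    fix u v assume e: "E u v"
    show "d u \<noteq> d v"
    proof
      assume "d u = d v"
      hence "blk u = blk v" unfolding d_def using h blkin EV[OF e] by (metis bij_betw_def inj_onD)
      hence "u \<in> blk v \<and> v \<in> blk v" using blkin EV[OF e] by metis
      thus False using ind blkin EV[OF e] e unfolding independent_def by blast
    qed
  qed
  have cls: "\<And>u. u \<in> V \<Longrightarrow> {v\<in>V. d v = d u} = blk u"
  proof -
    fix u assume u: "u \<in> V"
    show "{v\<in>V. d v = d u} = blk u"
    proof (intro equalityI subsetI)
      fix v assume "v \<in> {v\<in>V. d v = d u}"
      hence v: "v \<in> V" "d v = d u" by auto
      hence "blk v = blk u" unfolding d_def using h blkin u by (metis bij_betw_def inj_onD)
      thus "v \<in> blk u" using blkin v by metis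
    next
      fix v assume v: "v \<in> blk u"
      hence "v \<in> V" using blkin u cover by blast
      thus "v \<in> {v\<in>V. d v = d u}" using blk[OF _ conjunct1[OF blkin[OF u]]] v unfolding d_def by auto
    qed
  qed
  have av: "H_avoiding_coloring VH EH V E d (card PP)"
    unfolding H_avoiding_coloring_def
  proof (intro conjI pc allI notI)
    fix i j assume cp: "has_induced_copy VH EH {v \<in> V. d v = i \<or> d v = j} E"
    from key[OF H pc cp fV k2] have K: "i \<noteq> j" "bip_k2 VH EH \<le> card {v\<in>V. d v = i}"
      "bip_k2 VH EH \<le> card {v\<in>V. d v = j}"
      "bip_k1 VH EH \<le> max (card {v\<in>V. d v = i}) (card {v\<in>V. d v = j})" by auto
    have ne1: "{v\<in>V. d v = i} \<noteq> {}" using K(2) k2 by (metis card.empty le_zero_eq not_one_le_zero)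
    have ne2: "{v\<in>V. d v = j} \<noteq> {}" using K(3) k2 by (metis card.empty le_zero_eq not_one_le_zero)
    obtain u where u: "u \<in> V" "d u = i" using ne1 by blast
    obtain w where w: "w \<in> V" "d w = j" using ne2 by blast
    have ne: "blk u \<noteq> blk w" using u w K(1) unfolding d_def by auto
    have ci: "{v\<in>V. d v = i} = blk u" using cls[OF u(1)] u(2) by simp
    have cj: "{v\<in>V. d v = j} = blk w" using cls[OF w(1)] w(2) by simp
    have g: "card (blk u) < bip_k2 VH EH \<or> card (blk w) < bip_k2 VH EH
       \<or> (card (blk u) < bip_k1 VH EH \<and> card (blk w) < bip_k1 VH EH)"
      using good blkin[OF u(1)] blkin[OF w(1)] ne by blast
    show False using g K(2,3,4) unfolding ci cj by linarith
  qed
  show ?thesis unfolding chi_H_def by (rule Least_le) (use av in blast)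
qed

lemma family:
  fixes m :: nat and \<chi> :: nat
  assumes pc: "proper_coloring V E c \<chi>" and fV: "finite V" and m: "m \<ge> 1" and K: "K \<subseteq> {..<\<chi>}"
    and EV: "\<And>u v. E u v \<Longrightarrow> u \<in> V \<and> v \<in> V"
  shows "\<exists>PP. finite PP \<and> \<Union>PP = V \<and> (\<forall>P\<in>PP. \<forall>Q\<in>PP. P \<noteq> Q \<longrightarrow> P \<inter> Q = {})
     \<and> (\<forall>P\<in>PP. independent E P) \<and> (\<forall>P\<in>PP. (\<exists>i\<in>K. P = {v\<in>V. c v = i}) \<or> card P \<le> m)
     \<and> card PP * m \<le> card K * m + (\<Sum>i\<in>{..<\<chi>} - K. card {v\<in>V. c v = i} + m - 1)"
proof -
  define C where "C i = {v\<in>V. c v = i}" for i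
  define I where "I = {..<\<chi>} - K"
  have fC: "\<And>i. finite (C i)" unfolding C_def using fV by simp
  have "\<forall>i. \<exists>Q. finite Q \<and> \<Union>Q = C i \<and> (\<forall>P\<in>Q. \<forall>P'\<in>Q. P \<noteq> P' \<longrightarrow> P \<inter> P' = {})
     \<and> (\<forall>P\<in>Q. card P \<le> m) \<and> card Q * m \<le> card (C i) + m - 1"
    using split[OF fC m] by blast
  from choice[OF this] obtain Qf where Qf0: "\<forall>i. finite (Qf i) \<and> \<Union>(Qf i) = C i \<and> (\<forall>P\<in>Qf i. \<forall>P'\<in>Qf i. P \<noteq> P' \<longrightarrow> P \<inter> P' = {})
     \<and> (\<forall>P\<in>Qf i. card P \<le> m) \<and> card (Qf i) * m \<le> card (C i) + m - 1"
    by blast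
  have Qfin: "\<And>i. finite (Qf i)" using Qf0 by simp
  have Uq: "\<And>i. \<Union>(Qf i) = C i" using Qf0 by simp
  have Qdisj: "\<And>i P P'. P \<in> Qf i \<Longrightarrow> P' \<in> Qf i \<Longrightarrow> P \<noteq> P' \<Longrightarrow> P \<inter> P' = {}" using Qf0 by simp
  have Qsz: "\<And>i P. P \<in> Qf i \<Longrightarrow> card P \<le> m" using Qf0 by simp
  have Qcard: "\<And>i. card (Qf i) * m \<le> card (C i) + m - 1" using Qf0 by simp
  define PP where "PP = (\<Union>i\<in>I. Qf i) \<union> C ` K"
  have fI: "finite I" unfolding I_def by simp
  have fK: "finite K" using K finite_subset by blast
  have fin: "finite PP" unfolding PP_def using fI fK Qfin by auto
  have Vcov: "V = (\<Union>i\<in>{..<\<chi>}. C i)" unfolding C_def using pc unfolding proper_coloring_def by auto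
  have cov: "\<Union>PP = V"
  proof -
    have mem: "\<And>x i. x \<in> C i \<longleftrightarrow> (\<exists>X\<in>Qf i. x \<in> X)" by (metis Uq Union_iff)
    have "\<Union>PP = (\<Union>i\<in>I. C i) \<union> (\<Union>i\<in>K. C i)" 
    proof (intro equalityI subsetI)
      fix x assume "x \<in> \<Union>PP"
      then obtain X where X: "X \<in> PP" "x \<in> X" by blast
      show "x \<in> (\<Union>i\<in>I. C i) \<union> (\<Union>i\<in>K. C i)"
      proof (cases "X \<in> C ` K")
        case True thus ?thesis using X by blast
      next
        case False
        then obtain i where "i \<in> I" "X \<in> Qf i" using X unfolding PP_def by blast
        thus ?thesis using mem X by blast
      qed
    next
      fix x assume "x \<in> (\<Union>i\<in>I. C i) \<union> (\<Union>i\<in>K. C i)"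
      then consider i where "i \<in> I" "x \<in> C i" | i where "i \<in> K" "x \<in> C i" by blast
      thus "x \<in> \<Union>PP"
      proof cases
        case 1 then obtain X where "X \<in> Qf i" "x \<in> X" using mem by blast
        thus ?thesis using 1 unfolding PP_def by blast
      next
        case 2 thus ?thesis unfolding PP_def by blast
      qed
    qed
    also have "\<dots> = (\<Union>i\<in>{..<\<chi>}. C i)" unfolding I_def using K by blast
    finally show ?thesis using Vcov by simp
  qed
  have orig: "\<And>P. P \<in> PP \<Longrightarrow> \<exists>i. P \<subseteq> C i \<and> (i \<in> K \<longrightarrow> P = C i) \<and> (i \<notin> K \<longrightarrow> P \<in> Qf i)"
  proof -
    fix P assume "P \<in> PP"
    hence "P \<in> (\<Union>i\<in>I. Qf i) \<or> P \<in> C ` K" unfolding PP_def by simp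
    thus "\<exists>i. P \<subseteq> C i \<and> (i \<in> K \<longrightarrow> P = C i) \<and> (i \<notin> K \<longrightarrow> P \<in> Qf i)"
    proof
      assume "P \<in> (\<Union>i\<in>I. Qf i)"
      then obtain i where i: "i \<in> I" "P \<in> Qf i" by blast
      have "P \<subseteq> C i" using Uq[of i] i by blast
      thus ?thesis using i unfolding I_def by blast
    next
      assume "P \<in> C ` K" thus ?thesis by blast
    qed
  qed
  have disj: "\<forall>P\<in>PP. \<forall>Q\<in>PP. P \<noteq> Q \<longrightarrow> P \<inter> Q = {}"
  proof (intro ballI impI)
    fix P Q assume P: "P \<in> PP" and Q: "Q \<in> PP" and ne: "P \<noteq> Q"
    obtain i where i: "P \<subseteq> C i" "i \<in> K \<longrightarrow> P = C i" "i \<notin> K \<longrightarrow> P \<in> Qf i" using orig[OF P] by blast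
    obtain j where j: "Q \<subseteq> C j" "j \<in> K \<longrightarrow> Q = C j" "j \<notin> K \<longrightarrow> Q \<in> Qf j" using orig[OF Q] by blast
    show "P \<inter> Q = {}"
    proof (cases "i = j")
      case True
      thus ?thesis using i j ne Qdisj[of P i Q] by (cases "i \<in> K") auto
    next
      case False
      thus ?thesis using i j unfolding C_def by blast
    qed
  qed
  have ind: "\<forall>P\<in>PP. independent E P"
  proof
    fix P assume "P \<in> PP"
    then obtain i where "P \<subseteq> C i" using orig by blast
    thus "independent E P" unfolding independent_def C_def using pc unfolding proper_coloring_def
      by blast
  qed
  have sz: "\<forall>P\<in>PP. (\<exists>i\<in>K. P = {v\<in>V. c v = i}) \<or> card P \<le> m"
    unfolding PP_def C_def using Qsz by blast
  have "card PP \<le> card (\<Union>i\<in>I. Qf i) + card (C ` K)" unfolding PP_def by (rule card_Un_le)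
  also have "\<dots> \<le> (\<Sum>i\<in>I. card (Qf i)) + card K"
    using card_UN_le[OF fI, of Qf] card_image_le[OF fK, of C] by linarith
  finally have c1: "card PP * m \<le> ((\<Sum>i\<in>I. card (Qf i)) + card K) * m" by (rule mult_le_mono1)
  also have "\<dots> = (\<Sum>i\<in>I. card (Qf i) * m) + card K * m" by (simp add: sum_distrib_right add_mult_distrib)
  also have "\<dots> \<le> (\<Sum>i\<in>I. card (C i) + m - 1) + card K * m"
    using Qcard by (simp add: sum_mono)
  finally show ?thesis using fin cov disj ind sz unfolding I_def C_def by (auto simp: add.commute)
qed

lemma chrom_col:
  assumes G: "simple_graph V E"
  shows "\<exists>c. proper_coloring V E c (chromatic_number V E)"
proof -
  have fV: "finite V" using G by (simp add: simple_graph_def)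
  obtain h where h: "bij_betw h V {0..<card V}" using ex_bij_betw_finite_nat[OF fV] by blast
  have "proper_coloring V E h (card V)"
    unfolding proper_coloring_def
  proof (intro conjI ballI allI impI)
    fix v assume "v \<in> V" thus "h v < card V" using h by (auto dest: bij_betwE)
  next
    fix u v assume e: "E u v"
    have "u \<in> V" "v \<in> V" using G e unfolding simple_graph_def by blast+
    moreover have "u \<noteq> v" using G e unfolding simple_graph_def by blast
    ultimately
    show "h u \<noteq> h v" using h unfolding bij_betw_def by (metis inj_onD)
  qed
  thus ?thesis unfolding chromatic_number_def
    using LeastI_ex[of "\<lambda>k. \<exists>c. proper_coloring V E c k"] by blast
qed

lemma class_sum:
  assumes pc: "proper_coloring V E c k" and fV: "finite V"
  shows "(\<Sum>i<k. card {v\<in>V. c v = i}) = card V"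
proof -
  have V: "V = (\<Union>i\<in>{..<k}. {v\<in>V. c v = i})" using pc unfolding proper_coloring_def by auto
  have "card (\<Union>i\<in>{..<k}. {v\<in>V. c v = i}) = (\<Sum>i<k. card {v\<in>V. c v = i})"
    by (rule card_UN_disjoint) (use fV in auto)
  thus ?thesis using V by simp
qed

lemma k1_ge_k2:
  assumes H: "simple_graph VH EH" and b: "bipartite VH EH"
  shows "bip_k2 VH EH \<le> bip_k1 VH EH"
proof -
  have fin: "finite (bipartitions VH EH)" using bip_finite[OF H] .
  have ne: "bipartitions VH EH \<noteq> {}" using b by (simp add: bipartite_def)
  have "bip_k1 VH EH \<in> (\<lambda>(A, B). max (card A) (card B)) ` bipartitions VH EH"
    unfolding bip_k1_def by (rule Min_in) (use fin ne in auto)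
  then obtain A B where AB: "(A,B) \<in> bipartitions VH EH" "bip_k1 VH EH = max (card A) (card B)" by auto
  have "bip_k2 VH EH \<le> min (card A) (card B)"
    unfolding bip_k2_def by (rule Min_le) (use fin AB in auto)
  thus ?thesis using AB by (simp add: le_max_iff_disj)
qed

lemma bound1:
  assumes H: "simple_graph VH EH" and b: "bipartite VH EH" and G: "simple_graph V E"
    and k2: "bip_k2 VH EH \<ge> 2"
  shows "chi_H VH EH V E * (bip_k1 VH EH - 1) \<le> card V + chromatic_number V E * (bip_k1 VH EH - 2)"
proof -
  define m where "m = bip_k1 VH EH - 1"
  define \<chi> where "\<chi> = chromatic_number V E"
  have k1: "bip_k1 VH EH \<ge> 2" using k1_ge_k2[OF H b] k2 by simp
  have m1: "m \<ge> 1" unfolding m_def using k1 by simp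
  have fV: "finite V" using G by (simp add: simple_graph_def)
  have EV: "\<And>u v. E u v \<Longrightarrow> u \<in> V \<and> v \<in> V" using G by (simp add: simple_graph_def)
  obtain c where pc: "proper_coloring V E c \<chi>" using chrom_col[OF G] unfolding \<chi>_def by blast
  obtain PP where PP: "finite PP" "\<Union>PP = V" "\<forall>P\<in>PP. \<forall>Q\<in>PP. P \<noteq> Q \<longrightarrow> P \<inter> Q = {}"
     "\<forall>P\<in>PP. independent E P" "\<forall>P\<in>PP. (\<exists>i\<in>{}. P = {v\<in>V. c v = i}) \<or> card P \<le> m"
     "card PP * m \<le> card ({}::nat set) * m + (\<Sum>i\<in>{..<\<chi>} - {}. card {v\<in>V. c v = i} + m - 1)"
    using family[OF pc fV m1, of "{}"] EV by blast
  have good: "\<forall>P\<in>PP. \<forall>Q\<in>PP. P \<noteq> Q \<longrightarrow> card P < bip_k2 VH EH \<or> card Q < bip_k2 VH EH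
       \<or> (card P < bip_k1 VH EH \<and> card Q < bip_k1 VH EH)"
    using PP(5) unfolding m_def using k1 by fastforce
  have ch: "chi_H VH EH V E \<le> card PP"
    by (rule partition_chiH[OF H G _ PP(1-4) good]) (use k2 in simp)
  have "(\<Sum>i\<in>{..<\<chi>}. card {v\<in>V. c v = i} + m - 1) = (\<Sum>i\<in>{..<\<chi>}. card {v\<in>V. c v = i} + (m - 1))"
    using m1 by simp
  also have "\<dots> = card V + \<chi> * (m - 1)" using class_sum[OF pc fV] by (simp add: sum.distrib)
  finally have "card PP * m \<le> card V + \<chi> * (m - 1)" using PP(6) by simp
  moreover have "chi_H VH EH V E * m \<le> card PP * m" using ch by simp
  ultimately have X: "chi_H VH EH V E * m \<le> card V + \<chi> * (m - 1)" by linarith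
  have "m - 1 = bip_k1 VH EH - 2" unfolding m_def by simp
  thus ?thesis using X unfolding m_def \<chi>_def by simp
qed

lemma bound2:
  assumes H: "simple_graph VH EH" and G: "simple_graph V E"
    and k2: "bip_k2 VH EH \<ge> 2" and chi: "chromatic_number V E \<ge> 1"
  shows "\<exists>c0. chi_H VH EH V E * (bip_k2 VH EH - 1) \<le> (bip_k2 VH EH - 1) + (card V - c0)
      + (chromatic_number V E - 1) * (bip_k2 VH EH - 2) \<and> card V \<le> chromatic_number V E * c0 \<and> c0 \<le> card V"
proof -
  define m where "m = bip_k2 VH EH - 1"
  define \<chi> where "\<chi> = chromatic_number V E"
  have m1: "m \<ge> 1" unfolding m_def using k2 by simp
  have fV: "finite V" using G by (simp add: simple_graph_def)
  have EV: "\<And>u v. E u v \<Longrightarrow> u \<in> V \<and> v \<in> V" using G by (simp add: simple_graph_def)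
  obtain c where pc: "proper_coloring V E c \<chi>" using chrom_col[OF G] unfolding \<chi>_def by blast
  define C where "C i = card {v\<in>V. c v = i}" for i
  have fim: "finite (C ` {..<\<chi>})" by simp
  have "C 0 \<in> C ` {..<\<chi>}" using chi unfolding \<chi>_def by (intro imageI) simp
  hence nim: "C ` {..<\<chi>} \<noteq> {}" by blast
  obtain i0 where i0: "i0 < \<chi>" "C i0 = Max (C ` {..<\<chi>})" using Max_in[OF fim nim] by auto
  have mx: "\<And>i. i < \<chi> \<Longrightarrow> C i \<le> C i0" using i0 Max_ge[OF fim] by simp
  have K: "{i0} \<subseteq> {..<\<chi>}" using i0 by simp
  obtain PP where PPc: "finite PP \<and> \<Union>PP = V \<and> (\<forall>P\<in>PP. \<forall>Q\<in>PP. P \<noteq> Q \<longrightarrow> P \<inter> Q = {})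
     \<and> (\<forall>P\<in>PP. independent E P) \<and> (\<forall>P\<in>PP. (\<exists>i\<in>{i0}. P = {v\<in>V. c v = i}) \<or> card P \<le> m)
     \<and> card PP * m \<le> card {i0} * m + (\<Sum>i\<in>{..<\<chi>} - {i0}. card {v\<in>V. c v = i} + m - 1)"
    using family[OF pc fV m1 K EV] by (rule exE)
  note PP = conjunct1[OF PPc] conjunct1[OF conjunct2[OF PPc]] conjunct1[OF conjunct2[OF conjunct2[OF PPc]]]
    conjunct1[OF conjunct2[OF conjunct2[OF conjunct2[OF PPc]]]]
    conjunct1[OF conjunct2[OF conjunct2[OF conjunct2[OF conjunct2[OF PPc]]]]]
    conjunct2[OF conjunct2[OF conjunct2[OF conjunct2[OF conjunct2[OF PPc]]]]]
  have good: "\<forall>P\<in>PP. \<forall>Q\<in>PP. P \<noteq> Q \<longrightarrow> card P < bip_k2 VH EH \<or> card Q < bip_k2 VH EH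
       \<or> (card P < bip_k1 VH EH \<and> card Q < bip_k1 VH EH)"
  proof (intro ballI impI)
    fix P Q assume P: "P \<in> PP" and Q: "Q \<in> PP" and ne: "P \<noteq> Q"
    have "card P \<le> m \<or> card Q \<le> m" using PP(5) P Q ne by auto
    thus "card P < bip_k2 VH EH \<or> card Q < bip_k2 VH EH
       \<or> (card P < bip_k1 VH EH \<and> card Q < bip_k1 VH EH)" unfolding m_def using k2 by auto
  qed
  have ch: "chi_H VH EH V E \<le> card PP"
    by (rule partition_chiH[OF H G _ PP(1-4) good]) (use k2 in simp)
  have sm: "(\<Sum>i<\<chi>. C i) = card V" using class_sum[OF pc fV] unfolding C_def .
  have rem: "(\<Sum>i<\<chi>. C i) = C i0 + (\<Sum>i\<in>{..<\<chi>} - {i0}. C i)" using i0 by (simp add: sum.remove)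
  have cd: "card ({..<\<chi>} - {i0}) = \<chi> - 1" using i0 by simp
  have "(\<Sum>i\<in>{..<\<chi>} - {i0}. card {v\<in>V. c v = i} + m - 1) = (\<Sum>i\<in>{..<\<chi>} - {i0}. C i + (m - 1))"
    using m1 unfolding C_def by simp
  also have "\<dots> = (card V - C i0) + (\<chi> - 1) * (m - 1)" using sm rem cd by (simp add: sum.distrib)
  finally have "card PP * m \<le> m + (card V - C i0) + (\<chi> - 1) * (m - 1)" using PP(6) by simp
  moreover have "chi_H VH EH V E * m \<le> card PP * m" using ch by simp
  ultimately have A: "chi_H VH EH V E * m \<le> m + (card V - C i0) + (\<chi> - 1) * (m - 1)" by linarith
  have "card V \<le> (\<Sum>i<\<chi>. C i0)" unfolding sm[symmetric] by (rule sum_mono) (use mx in simp)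
  hence B: "card V \<le> \<chi> * C i0" by simp
  have Cc: "C i0 \<le> card V" using sm rem by linarith
  have m2: "m - 1 = bip_k2 VH EH - 2" unfolding m_def by simp
  from A have A': "chi_H VH EH V E * m \<le> m + (card V - C i0) + (\<chi> - 1) * (bip_k2 VH EH - 2)"
    by (simp only: m2)
  show ?thesis using A' B Cc unfolding m_def \<chi>_def by blast
qed

lemma bound3:
  assumes H: "simple_graph VH EH" and G: "simple_graph V E" and k2: "bip_k2 VH EH = 2"
  shows "chi_H VH EH V E + independence_number V E \<le> card V + 1"
proof -
  have fV: "finite V" using G by (simp add: simple_graph_def)
  define F where "F = {S. S \<subseteq> V \<and> independent E S}"
  have fF: "finite (card ` F)" unfolding F_def using fV by simp
  have nF: "card ` F \<noteq> {}" unfolding F_def by (auto intro!: exI[of _ "{}"] simp: independent_def)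
  obtain S where S: "S \<subseteq> V" "independent E S" "card S = independence_number V E"
    using Max_in[OF fF nF] unfolding independence_number_def F_def by auto
  define PP where "PP = insert S ((\<lambda>v. {v}) ` (V - S))"
  have fin: "finite PP" unfolding PP_def using fV by simp
  have cov: "\<Union>PP = V" unfolding PP_def using S by auto
  have disj: "\<forall>P\<in>PP. \<forall>Q\<in>PP. P \<noteq> Q \<longrightarrow> P \<inter> Q = {}" unfolding PP_def by auto
  have irr: "\<And>u. \<not> E u u" using G by (simp add: simple_graph_def)
  have ind: "\<forall>P\<in>PP. independent E P" unfolding PP_def using S irr by (auto simp: independent_def)
  have good: "\<forall>P\<in>PP. \<forall>Q\<in>PP. P \<noteq> Q \<longrightarrow> card P < bip_k2 VH EH \<or> card Q < bip_k2 VH EH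
       \<or> (card P < bip_k1 VH EH \<and> card Q < bip_k1 VH EH)"
    unfolding PP_def using k2 by auto
  have ch: "chi_H VH EH V E \<le> card PP"
    by (rule partition_chiH[OF H G _ fin cov disj ind good]) (use k2 in simp)
  have "card PP \<le> Suc (card ((\<lambda>v. {v}) ` (V - S)))" unfolding PP_def by (rule card_insert_le_m1) auto
  also have "\<dots> \<le> Suc (card (V - S))" using card_image_le fV by (simp add: card_image_le)
  also have "\<dots> = Suc (card V - card S)" using S fV by (simp add: card_Diff_subset finite_subset)
  finally show ?thesis using ch S card_mono[OF fV S(1)] by linarith
qed

lemma eq_aux:
  fixes n d x :: real
  assumes "d \<noteq> 0"
  shows "n / d * (1 - 1 / x) + (d - 1) / d * (x - 1) + 1 = ((n - n / x) + (d - 1) * (x - 1) + d) / d"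
proof -
  have "((n - n / x) + (d - 1) * (x - 1) + d) / d = (n - n / x) / d + (d - 1) * (x - 1) / d + d / d"
    by (simp add: add_divide_distrib)
  also have "\<dots> = n / d * (1 - 1 / x) + (d - 1) / d * (x - 1) + 1" using assms
    by (simp add: right_diff_distrib diff_divide_distrib left_diff_distrib mult.commute)
  finally show ?thesis by simp
qed

theorem proposition1:
  fixes VH :: "'b set" and EH :: "'b \<Rightarrow> 'b \<Rightarrow> bool"
    and V :: "'a set" and E :: "'a \<Rightarrow> 'a \<Rightarrow> bool"
  assumes "simple_graph VH EH" and "bipartite VH EH"
    and "simple_graph V E"
    and "bip_k2 VH EH \<ge> 2"
  defines "k1 \<equiv> real (bip_k1 VH EH)" and "k2 \<equiv> real (bip_k2 VH EH)"
    and "n \<equiv> real (card V)" and "\<chi> \<equiv> real (chromatic_number V E)"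
    and "\<alpha> \<equiv> real (independence_number V E)"
  shows "(bip_k2 VH EH \<ge> 3 \<longrightarrow>
           real (chi_H VH EH V E) \<le> min (n / (k1 - 1) + (k1 - 2) / (k1 - 1) * \<chi>)
              (n / (k2 - 1) * (1 - 1 / \<chi>) + (k2 - 2) / (k2 - 1) * (\<chi> - 1) + 1))
       \<and> (bip_k2 VH EH = 2 \<longrightarrow>
           real (chi_H VH EH V E) \<le> min (n / (k1 - 1) + (k1 - 2) / (k1 - 1) * \<chi>)
              (n - \<alpha> + 1))"
proof -
  note H = assms(1) and b = assms(2) and G = assms(3) and k2a = assms(4)
  define ch where "ch = real (chi_H VH EH V E)"
  have K12: "bip_k2 VH EH \<le> bip_k1 VH EH" using k1_ge_k2[OF H b] .
  have k2ge: "k2 \<ge> 2" unfolding k2_def using k2a by simp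
  have k1ge: "k1 \<ge> 2" unfolding k1_def using k2a K12 by simp
  have B1n: "chi_H VH EH V E * (bip_k1 VH EH - 1) \<le> card V + chromatic_number V E * (bip_k1 VH EH - 2)"
    using bound1[OF H b G k2a] .
  have "real (chi_H VH EH V E * (bip_k1 VH EH - 1)) \<le> real (card V + chromatic_number V E * (bip_k1 VH EH - 2))"
    using B1n by (simp only: of_nat_le_iff)
  hence B1r: "ch * (k1 - 1) \<le> n + \<chi> * (k1 - 2)"
    unfolding ch_def k1_def n_def \<chi>_def using k2a K12 by (simp add: of_nat_diff)
  have bound1r: "ch \<le> n / (k1 - 1) + (k1 - 2) / (k1 - 1) * \<chi>"
  proof -
    have "n / (k1 - 1) + (k1 - 2) / (k1 - 1) * \<chi> = (n + \<chi> * (k1 - 2)) / (k1 - 1)"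
    proof -
      have "k1 - 1 \<noteq> 0" using k1ge by simp
      thus ?thesis by (simp add: add_divide_distrib mult.commute)
    qed
    thus ?thesis using B1r k1ge by (simp add: pos_le_divide_eq)
  qed
  have ch0: "ch \<ge> 0" unfolding ch_def by simp
  have part2: "bip_k2 VH EH \<ge> 3 \<longrightarrow> ch \<le> n / (k2 - 1) * (1 - 1 / \<chi>) + (k2 - 2) / (k2 - 1) * (\<chi> - 1) + 1"
  proof
    assume k3: "bip_k2 VH EH \<ge> 3"
    show "ch \<le> n / (k2 - 1) * (1 - 1 / \<chi>) + (k2 - 2) / (k2 - 1) * (\<chi> - 1) + 1"
    proof (cases "chromatic_number V E = 0")
      case True
      obtain c where "proper_coloring V E c (chromatic_number V E)" using chrom_col[OF G] by blast
      hence "V = {}" using True unfolding proper_coloring_def by auto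
      hence n0: "n = 0" unfolding n_def by simp
      have x0: "\<chi> = 0" unfolding \<chi>_def using True by simp
      have "ch * (k1 - 1) \<le> 0" using B1r n0 x0 by simp
      hence c0: "ch = 0" using ch0 k1ge by (smt (verit) mult_pos_pos)
      have "(k2 - 2) / (k2 - 1) \<le> 1" using k2ge by (simp add: divide_le_eq_1)
      thus ?thesis using c0 n0 x0 by simp
    next
      case False
      hence X1: "chromatic_number V E \<ge> 1" by simp
      obtain c0 where c0: "chi_H VH EH V E * (bip_k2 VH EH - 1) \<le> (bip_k2 VH EH - 1) + (card V - c0)
        + (chromatic_number V E - 1) * (bip_k2 VH EH - 2)" "card V \<le> chromatic_number V E * c0" "c0 \<le> card V"
        using bound2[OF H G k2a X1] by blast
      have "real (chi_H VH EH V E * (bip_k2 VH EH - 1)) \<le> real ((bip_k2 VH EH - 1) + (card V - c0)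
        + (chromatic_number V E - 1) * (bip_k2 VH EH - 2))" using c0(1) by (simp only: of_nat_le_iff)
      hence R1: "ch * (k2 - 1) \<le> (k2 - 1) + (n - real c0) + (\<chi> - 1) * (k2 - 2)"
        unfolding ch_def k2_def n_def \<chi>_def using k2a c0(3) X1 by (simp add: of_nat_diff)
      have "real (card V) \<le> real (chromatic_number V E * c0)" using c0(2) by (simp only: of_nat_le_iff)
      hence R2: "n \<le> \<chi> * real c0" unfolding n_def \<chi>_def by simp
      have xp: "\<chi> \<ge> 1" unfolding \<chi>_def using X1 by simp
      have R3: "n / \<chi> \<le> real c0" using R2 xp by (simp add: divide_le_eq mult.commute)
      have eq: "n / (k2 - 1) * (1 - 1 / \<chi>) + (k2 - 2) / (k2 - 1) * (\<chi> - 1) + 1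
          = ((n - n / \<chi>) + (k2 - 2) * (\<chi> - 1) + (k2 - 1)) / (k2 - 1)"
      proof -
        have "k2 - 1 \<noteq> 0" using k2ge by auto
        from eq_aux[OF this, of n \<chi>] show ?thesis by (simp add: algebra_simps)
      qed
      have "ch * (k2 - 1) \<le> (n - n / \<chi>) + (k2 - 2) * (\<chi> - 1) + (k2 - 1)"
        using R1 R3 by (simp add: algebra_simps)
      thus ?thesis unfolding eq using k2ge by (simp add: pos_le_divide_eq)
    qed
  qed
  have part3: "bip_k2 VH EH = 2 \<longrightarrow> ch \<le> n - \<alpha> + 1"
  proof
    assume k: "bip_k2 VH EH = 2"
    have "chi_H VH EH V E + independence_number V E \<le> card V + 1" using bound3[OF H G k] .
    hence "real (chi_H VH EH V E + independence_number V E) \<le> real (card V + 1)" by (simp only: of_nat_le_iff)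
    thus "ch \<le> n - \<alpha> + 1" unfolding ch_def n_def \<alpha>_def by simp
  qed
  show ?thesis using bound1r part2 part3 unfolding ch_def by simp
qed

end
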